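(* Fix $\epsilon>0$, a graphlet $\mathsf{G}$ on $k$ vertices, and a simple undirected graph $G$. The output $\tilde{\mathsf{G}}(G)$ of Algorithm 1 (described in the context) is an unbiased estimator of $\mathsf{G}(G)$, i.e. $\mathbb{E}[\tilde{\mathsf{G}}(G)]=\mathsf{G}(G)$.
   Context: Let $G=(V,E)$ be a simple undirected graph with $V=\{v_1,\dots,v_n\}$; user $v_i$ holds $a_i=(a_{i,1},\dots,a_{i,n})$ with $a_{i,j}=1$ iff $\{v_i,v_j\}\in E$. A graphlet is a simple graph $\mathsf{G}=(\mathsf{V},\mathsf{E})$, $\mathsf{V}=\{u_1,\dots,u_k\}$; $\mathsf{G}(G)$ is the number of distinct (not necessarily induced) subgraphs of $G$ isomorphic to $\mathsf{G}$, and $A(\mathsf{G})$ the number of automorphisms of $\mathsf{G}$. Algorithm 1: (1) every user $v_i$ reports, independently for each $j\ne i$ and independently across users, a bit $\tilde a_{i,j}$ with $\Pr[\tilde a_{i,j}=1]=e^{\epsilon}/(1+e^{\epsilon})$ if $a_{i,j}=1$ and $1/(1+e^{\epsilon})$ if $a_{i,j}=0$; (2) the server sets $\hat a_{i,j}=\frac{e^{\epsilon}+1}{e^{\epsilon}-1}\tilde a_{i,j}-\frac{1}{e^{\epsilon}-1}$; (3) with $\mathcal{D}$ the set of tuples $\mathcal{W}=(v_{\ell_1},\dots,v_{\ell_k})$ of pairwise distinct nodes, it sets $\tilde W(\mathcal{W},\mathsf{G})=\prod_{\{u_i,u_j\}\in\mathsf{E},\,i<j}\hat a_{\ell_i,\ell_j}$;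 (4) it outputs $\tilde{\mathsf{G}}(G)=\big(\sum_{\mathcal{W}\in\mathcal{D}}\tilde W(\mathcal{W},\mathsf{G})\big)/A(\mathsf{G})$. *)

theory Defs
  imports "HOL-Probability.Probability"
begin

text \<open>A simple undirected graph on the vertex set {0..<n} (vertex v_(i+1) is i),
  given by a symmetric irreflexive adjacency relation supported on {0..<n}.\<close>
definition simple_graph :: "nat \<Rightarrow> (nat \<Rightarrow> nat \<Rightarrow> bool) \<Rightarrow> bool" where
  "simple_graph n E \<longleftrightarrow>
     (\<forall>i j. E i j \<longrightarrow> i < n \<and> j < n \<and> i \<noteq> j) \<and> (\<forall>i j. E i j \<longrightarrow> E j i)"

text \<open>Number of (not necessarily induced) subgraphs (S,T) of G isomorphic to the graphlet
  (vertices {0..<k}, adjacency F).\<close>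
definition graphlet_count ::
  "nat \<Rightarrow> (nat \<Rightarrow> nat \<Rightarrow> bool) \<Rightarrow> nat \<Rightarrow> (nat \<Rightarrow> nat \<Rightarrow> bool) \<Rightarrow> nat" where
  "graphlet_count n E k F = card {(S, T). S \<subseteq> {0..<n} \<and> T \<subseteq> {{i, j} | i j. E i j} \<and>
      (\<exists>f. bij_betw f {0..<k} S \<and> T = {{f i, f j} | i j. i < k \<and> j < k \<and> F i j})}"

definition num_aut :: "nat \<Rightarrow> (nat \<Rightarrow> nat \<Rightarrow> bool) \<Rightarrow> nat" where
  "num_aut k F = card {p \<in> {0..<k} \<rightarrow>\<^sub>E {0..<k}. bij_betw p {0..<k} {0..<k} \<and>
      (\<forall>i j. i < k \<longrightarrow> j < k \<longrightarrow> (F (p i) (p j) \<longleftrightarrow> F i j))}"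

definition rr_prob :: "real \<Rightarrow> bool \<Rightarrow> real" where
  "rr_prob eps b = (if b then exp eps / (1 + exp eps) else 1 / (1 + exp eps))"

definition reports_pmf :: "nat \<Rightarrow> (nat \<Rightarrow> nat \<Rightarrow> bool) \<Rightarrow> real \<Rightarrow> (nat \<times> nat \<Rightarrow> bool) pmf" where
  "reports_pmf n E eps = Pi_pmf {(i, j). i < n \<and> j < n \<and> i \<noteq> j} False
      (\<lambda>(i, j). bernoulli_pmf (rr_prob eps (E i j)))"

definition a_hat :: "real \<Rightarrow> (nat \<times> nat \<Rightarrow> bool) \<Rightarrow> nat \<Rightarrow> nat \<Rightarrow> real" where
  "a_hat eps r i j = (exp eps + 1) / (exp eps - 1) * (if r (i, j) then 1 else 0) - 1 / (exp eps - 1)"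

definition tuples :: "nat \<Rightarrow> nat \<Rightarrow> (nat \<Rightarrow> nat) set" where
  "tuples n k = {l \<in> {0..<k} \<rightarrow>\<^sub>E {0..<n}. inj_on l {0..<k}}"

definition W_tilde :: "real \<Rightarrow> nat \<Rightarrow> (nat \<Rightarrow> nat \<Rightarrow> bool) \<Rightarrow> (nat \<times> nat \<Rightarrow> bool) \<Rightarrow> (nat \<Rightarrow> nat) \<Rightarrow> real" where
  "W_tilde eps k F r l = (\<Prod>(i, j) \<in> {(i, j). i < j \<and> j < k \<and> F i j}. a_hat eps r (l i) (l j))"

definition estimator :: "nat \<Rightarrow> nat \<Rightarrow> (nat \<Rightarrow> nat \<Rightarrow> bool) \<Rightarrow> real \<Rightarrow> (nat \<times> nat \<Rightarrow> bool) \<Rightarrow> real" where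
  "estimator n k F eps r = (\<Sum>l \<in> tuples n k. W_tilde eps k F r l) / real (num_aut k F)"

end

theory Submission
  imports Defs
begin

lemma expectation_prod_Pi_pmf_bool:
  fixes g :: "'a \<Rightarrow> bool \<Rightarrow> real"
  assumes A: "finite A" and I: "I \<subseteq> A"
  shows "measure_pmf.expectation (Pi_pmf A dflt p) (\<lambda>\<omega>. \<Prod>i\<in>I. g i (\<omega> i))
       = (\<Prod>i\<in>I. measure_pmf.expectation (p i) (g i))"
proof -
  have fin: "finite (set_pmf (Pi_pmf A dflt p))"
    using A by (simp add: set_Pi_pmf finite_PiE_dflt)
  have ind: "prob_space.indep_vars (measure_pmf (Pi_pmf A dflt p)) (\<lambda>_. borel) (\<lambda>i \<omega>. g i (\<omega> i)) I"
  proof -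
    have "prob_space.indep_vars (measure_pmf (Pi_pmf A dflt p)) (\<lambda>_. count_space UNIV) (\<lambda>x f. f x) I"
      using prob_space.indep_vars_subset[OF measure_pmf.prob_space_axioms indep_vars_Pi_pmf[OF A] I] .
    from prob_space.indep_vars_compose[OF measure_pmf.prob_space_axioms this, of g "\<lambda>_. borel"]
    show ?thesis by (simp add: comp_def)
  qed
  have "measure_pmf.expectation (Pi_pmf A dflt p) (\<lambda>\<omega>. \<Prod>i\<in>I. g i (\<omega> i))
       = (\<Prod>i\<in>I. measure_pmf.expectation (Pi_pmf A dflt p) (\<lambda>\<omega>. g i (\<omega> i)))"
    by (rule prob_space.indep_vars_lebesgue_integral[OF measure_pmf.prob_space_axioms finite_subset[OF I A] ind])
       (rule integrable_measure_pmf_finite[OF fin])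
  also have "\<dots> = (\<Prod>i\<in>I. measure_pmf.expectation (p i) (g i))"
  proof (rule prod.cong[OF refl])
    fix i assume "i \<in> I"
    hence "map_pmf (\<lambda>f. f i) (Pi_pmf A dflt p) = p i" using I A by (simp add: Pi_pmf_component subsetD)
    hence "measure_pmf.expectation (map_pmf (\<lambda>f. f i) (Pi_pmf A dflt p)) (g i) = measure_pmf.expectation (p i) (g i)" by simp
    thus "measure_pmf.expectation (Pi_pmf A dflt p) (\<lambda>\<omega>. g i (\<omega> i)) = measure_pmf.expectation (p i) (g i)"
      by simp
  qed
  finally show ?thesis .
qed


definition good :: "nat \<Rightarrow> (nat \<Rightarrow> nat \<Rightarrow> bool) \<Rightarrow> (nat \<Rightarrow> nat \<Rightarrow> bool) \<Rightarrow> (nat \<Rightarrow> nat) \<Rightarrow> bool" where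
  "good k E F l \<longleftrightarrow> (\<forall>i j. i < k \<longrightarrow> j < k \<longrightarrow> F i j \<longrightarrow> E (l i) (l j))"

definition Phi :: "nat \<Rightarrow> (nat \<Rightarrow> nat \<Rightarrow> bool) \<Rightarrow> (nat \<Rightarrow> nat) \<Rightarrow> nat set \<times> nat set set" where
  "Phi k F l = (l ` {0..<k}, {{l i, l j} | i j. i < k \<and> j < k \<and> F i j})"

lemma key_refl:
  assumes F: "simple_graph k F"
    and l: "inj_on l {0..<k}" and l0: "inj_on l0 {0..<k}"
    and eq: "Phi k F l = Phi k F l0" and ij: "i < k" "j < k" "F i j"
  shows "F (inv_into {0..<k} l0 (l i)) (inv_into {0..<k} l0 (l j))"
proof -
  have "{l i, l j} \<in> snd (Phi k F l)" using ij unfolding Phi_def by auto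
  hence "{l i, l j} \<in> snd (Phi k F l0)" using eq by simp
  then obtain a b where ab: "a < k" "b < k" "F a b" "{l i, l j} = {l0 a, l0 b}"
    unfolding Phi_def by auto
  have ia: "inv_into {0..<k} l0 (l0 a) = a" and ib: "inv_into {0..<k} l0 (l0 b) = b"
    using ab l0 by (auto intro: inv_into_f_f)
  from ab(4) have "(l i = l0 a \<and> l j = l0 b) \<or> (l i = l0 b \<and> l j = l0 a)"
    by (auto simp: doubleton_eq_iff)
  thus ?thesis
  proof
    assume "l i = l0 a \<and> l j = l0 b" thus ?thesis using ia ib ab by simp
  next
    assume "l i = l0 b \<and> l j = l0 a"
    moreover have "F b a" using F ab unfolding simple_graph_def by blast
    ultimately show ?thesis using ia ib by simp
  qed
qed

lemma fiber_card:
  assumes F: "simple_graph k F" and E: "simple_graph n E"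
    and l0: "l0 \<in> tuples n k" "good k E F l0"
  shows "card {l \<in> {l \<in> tuples n k. good k E F l}. Phi k F l = Phi k F l0} = num_aut k F"
proof -
  define K where "K = {0..<k}"
  define Aut where "Aut = {p \<in> K \<rightarrow>\<^sub>E K. bij_betw p K K \<and>
      (\<forall>i j. i < k \<longrightarrow> j < k \<longrightarrow> (F (p i) (p j) \<longleftrightarrow> F i j))}"
  have nA: "num_aut k F = card Aut" unfolding num_aut_def Aut_def K_def by (rule refl)
  have l0P: "l0 \<in> K \<rightarrow>\<^sub>E {0..<n}" and l0i: "inj_on l0 K"
    using l0(1) unfolding tuples_def K_def by blast+
  define \<psi> where "\<psi> p = restrict (l0 \<circ> p) K" for p :: "nat \<Rightarrow> nat"
  have "bij_betw \<psi> Aut {l \<in> {l \<in> tuples n k. good k E F l}. Phi k F l = Phi k F l0}"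
  proof (rule bij_betwI')
    fix p q assume p: "p \<in> Aut" and q: "q \<in> Aut"
    have pK: "p \<in> K \<rightarrow>\<^sub>E K" using p unfolding Aut_def by blast
    have qK: "q \<in> K \<rightarrow>\<^sub>E K" using q unfolding Aut_def by blast
    show "(\<psi> p = \<psi> q) = (p = q)"
    proof
      assume h: "\<psi> p = \<psi> q"
      show "p = q"
      proof (rule ext)
        fix i show "p i = q i"
        proof (cases "i \<in> K")
          case True
          have a: "l0 (p i) = l0 (q i)" using fun_cong[OF h, of i] True unfolding \<psi>_def by simp
          have b: "p i \<in> K" "q i \<in> K" using pK qK True by (auto simp only: PiE_iff)
          show ?thesis by (rule inj_onD[OF l0i a b])
        next
          case False show ?thesis by (simp only: PiE_arb[OF pK False] PiE_arb[OF qK False])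
        qed
      qed
    qed simp
  next
    fix p assume p: "p \<in> Aut"
    hence pK: "p \<in> K \<rightarrow>\<^sub>E K" and pb: "bij_betw p K K"
      and pa: "\<And>i j. i < k \<Longrightarrow> j < k \<Longrightarrow> (F (p i) (p j) \<longleftrightarrow> F i j)" unfolding Aut_def by auto
    have pi: "p i \<in> K" if "i \<in> K" for i using pK that by auto
    have t1: "\<psi> p \<in> {0..<k} \<rightarrow>\<^sub>E {0..<n}" using l0P pi unfolding \<psi>_def K_def by auto
    have t2: "inj_on (\<psi> p) {0..<k}"
    proof (rule inj_onI)
      fix i j assume ij: "i \<in> {0..<k}" "j \<in> {0..<k}" "\<psi> p i = \<psi> p j"
      hence "l0 (p i) = l0 (p j)" unfolding \<psi>_def K_def by simp
      hence "p i = p j" using inj_onD[OF l0i] pi ij K_def by blast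
      thus "i = j" using pb ij K_def unfolding bij_betw_def by (meson inj_onD)
    qed
    have "\<psi> p \<in> tuples n k" unfolding tuples_def using t1 t2 by blast
    moreover have "good k E F (\<psi> p)"
      unfolding good_def
    proof (intro allI impI)
      fix i j assume "i < k" "j < k" "F i j"
      hence "F (p i) (p j)" "p i < k" "p j < k" using pa pi K_def by auto
      hence "E (l0 (p i)) (l0 (p j))" using l0(2) unfolding good_def by blast
      thus "E (\<psi> p i) (\<psi> p j)" using \<open>i<k\<close> \<open>j<k\<close> unfolding \<psi>_def K_def by simp
    qed
    moreover have "Phi k F (\<psi> p) = Phi k F l0"
    proof -
      have pKK: "p ` K = K" using pb by (simp add: bij_betw_def)
      have "\<psi> p ` K = l0 ` K"
      proof -
        have "\<psi> p ` K = l0 ` (p ` K)" unfolding \<psi>_def by auto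
        thus ?thesis using pKK by simp
      qed
      moreover have "{{\<psi> p i, \<psi> p j} | i j. i < k \<and> j < k \<and> F i j} = {{l0 i, l0 j} | i j. i < k \<and> j < k \<and> F i j}"
      proof safe
        fix x i j assume "i < k" "j < k" "F i j"
        thus "\<exists>a b. {\<psi> p i, \<psi> p j} = {l0 a, l0 b} \<and> a < k \<and> b < k \<and> F a b"
          using pa pi unfolding \<psi>_def K_def by (intro exI[of _ "p i"] exI[of _ "p j"]) auto
      next
        fix x a b assume ab: "a < k" "b < k" "F a b"
        have "a \<in> p ` K" "b \<in> p ` K" using ab pKK K_def by auto
        then obtain i j where ij: "i \<in> K" "j \<in> K" "a = p i" "b = p j" by blast
        hence "F i j" using pa ab K_def by auto
        thus "\<exists>i j. {l0 a, l0 b} = {\<psi> p i, \<psi> p j} \<and> i < k \<and> j < k \<and> F i j"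
          using ij unfolding \<psi>_def K_def by (intro exI[of _ i] exI[of _ j]) auto
      qed
      ultimately show ?thesis unfolding Phi_def K_def by simp
    qed
    ultimately show "\<psi> p \<in> {l \<in> {l \<in> tuples n k. good k E F l}. Phi k F l = Phi k F l0}" by simp
  next
    fix l assume "l \<in> {l \<in> {l \<in> tuples n k. good k E F l}. Phi k F l = Phi k F l0}"
    hence lt: "l \<in> tuples n k" and lph: "Phi k F l = Phi k F l0" by auto
    have lP: "l \<in> K \<rightarrow>\<^sub>E {0..<n}" and li: "inj_on l K" using lt unfolding tuples_def K_def by auto
    have img: "l ` K = l0 ` K" using lph unfolding Phi_def K_def by simp
    define p where "p = restrict (\<lambda>i. inv_into K l0 (l i)) K"
    have pi: "p i \<in> K" if "i \<in> K" for i
      proof -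
      have "l i \<in> l0 ` K" using that img by blast
      thus ?thesis unfolding p_def using that by (simp add: inv_into_into)
    qed
    have l0p: "l0 (p i) = l i" if "i \<in> K" for i
      proof -
      have "l i \<in> l0 ` K" using that img by blast
      thus ?thesis unfolding p_def using that by (simp add: f_inv_into_f)
    qed
    have pinj: "inj_on p K"
    proof (rule inj_onI)
      fix i j assume "i \<in> K" "j \<in> K" "p i = p j"
      hence "l i = l j" using l0p by metis
      thus "i = j" using inj_onD[OF li] \<open>i \<in> K\<close> \<open>j \<in> K\<close> by blast
    qed
    have pKK: "p ` K = K" by (rule endo_inj_surj) (use pi pinj K_def in auto)
    have "p \<in> Aut"
      unfolding Aut_def
    proof (intro CollectI conjI allI impI)
      show "p \<in> K \<rightarrow>\<^sub>E K" using pi unfolding p_def by auto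
      show "bij_betw p K K" using pinj pKK by (simp add: bij_betw_def)
      fix i j assume ij: "i < k" "j < k"
      show "F (p i) (p j) = F i j"
      proof
        assume "F i j"
        thus "F (p i) (p j)" using key_refl[OF F li[unfolded K_def] l0i[unfolded K_def] lph ij] ij
          unfolding p_def K_def by simp
      next
        assume h: "F (p i) (p j)"
        have "p i < k" "p j < k" using pi ij K_def by auto
        from key_refl[OF F l0i[unfolded K_def] li[unfolded K_def] lph[symmetric] this h]
        have "F (inv_into K l (l i)) (inv_into K l (l j))" using l0p ij K_def by simp
        thus "F i j" using li ij K_def by (simp add: inv_into_f_f)
      qed
    qed
    moreover have "l = \<psi> p"
    proof
      fix i show "l i = \<psi> p i"
      proof (cases "i \<in> K")
        case True thus ?thesis using l0p unfolding \<psi>_def by simp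
      next
        case False thus ?thesis unfolding \<psi>_def by (simp only: PiE_arb[OF lP False] restrict_apply if_False)
      qed
    qed
    ultimately show "\<exists>p \<in> Aut. l = \<psi> p" by blast
  qed
  from bij_betw_same_card[OF this] show ?thesis using nA by simp
qed


lemma finite_tuples: "finite (tuples n k)"
proof -
  have "tuples n k \<subseteq> {0..<k} \<rightarrow>\<^sub>E {0..<n}" unfolding tuples_def by blast
  thus ?thesis by (rule finite_subset) (simp add: finite_PiE)
qed

lemma GC_eq:
  assumes F: "simple_graph k F" and E: "simple_graph n E"
  shows "{(S, T). S \<subseteq> {0..<n} \<and> T \<subseteq> {{i, j} | i j. E i j} \<and>
      (\<exists>f. bij_betw f {0..<k} S \<and> T = {{f i, f j} | i j. i < k \<and> j < k \<and> F i j})}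
    = Phi k F ` {l \<in> tuples n k. good k E F l}" (is "?G = _")
proof
  show "Phi k F ` {l \<in> tuples n k. good k E F l} \<subseteq> ?G"
  proof
    fix y assume "y \<in> Phi k F ` {l \<in> tuples n k. good k E F l}"
    then obtain l where l: "l \<in> tuples n k" "good k E F l" and y: "y = Phi k F l" by blast
    have lP: "l \<in> {0..<k} \<rightarrow>\<^sub>E {0..<n}" and li: "inj_on l {0..<k}" using l(1) unfolding tuples_def by blast+
    have s1: "l ` {0..<k} \<subseteq> {0..<n}" using lP by blast
    have s2: "{{l i, l j} | i j. i < k \<and> j < k \<and> F i j} \<subseteq> {{i, j} | i j. E i j}"
    proof
      fix x assume "x \<in> {{l i, l j} | i j. i < k \<and> j < k \<and> F i j}"
      then obtain i j where "x = {l i, l j}" "i < k" "j < k" "F i j" by blast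
      moreover have "E (l i) (l j)" using l(2) calculation unfolding good_def by blast
      ultimately show "x \<in> {{i, j} | i j. E i j}" by blast
    qed
    have s3: "bij_betw l {0..<k} (l ` {0..<k})" using li by (simp add: bij_betw_def)
    show "y \<in> ?G" unfolding y Phi_def using s1 s2 s3 by blast
  qed
next
  show "?G \<subseteq> Phi k F ` {l \<in> tuples n k. good k E F l}"
  proof
    fix y assume "y \<in> ?G"
    then obtain S T f where y: "y = (S, T)" and S: "S \<subseteq> {0..<n}" and T: "T \<subseteq> {{i, j} | i j. E i j}"
      and fb: "bij_betw f {0..<k} S" and Teq: "T = {{f i, f j} | i j. i < k \<and> j < k \<and> F i j}" by blast
    define l where "l = restrict f {0..<k}"
    have lP: "l \<in> {0..<k} \<rightarrow>\<^sub>E {0..<n}" using fb S unfolding l_def bij_betw_def by auto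
    have li: "inj_on l {0..<k}" using fb unfolding l_def bij_betw_def inj_on_def by simp
    have lt: "l \<in> tuples n k" unfolding tuples_def using lP li by blast
    have lg: "good k E F l" unfolding good_def
    proof (intro allI impI)
      fix i j assume ij: "i < k" "j < k" "F i j"
      hence "{f i, f j} \<in> T" using Teq by blast
      then obtain a b where "E a b" "{f i, f j} = {a, b}" using T by blast
      hence "E (f i) (f j)" using E unfolding simple_graph_def doubleton_eq_iff by blast
      thus "E (l i) (l j)" using ij unfolding l_def by simp
    qed
    have "Phi k F l = (S, T)"
    proof -
      have "l ` {0..<k} = S" using fb unfolding l_def bij_betw_def by simp
      moreover have "{{l i, l j} | i j. i < k \<and> j < k \<and> F i j} = T"
        unfolding Teq l_def by auto
      ultimately show ?thesis unfolding Phi_def by simp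
    qed
    thus "y \<in> Phi k F ` {l \<in> tuples n k. good k E F l}" using lt lg y by (intro image_eqI[of _ _ l]) auto
  qed
qed

lemma num_aut_pos: "num_aut k F > 0"
proof -
  have m: "restrict id {0..<k} \<in> {p \<in> {0..<k} \<rightarrow>\<^sub>E {0..<k}. bij_betw p {0..<k} {0..<k} \<and>
      (\<forall>i j. i < k \<longrightarrow> j < k \<longrightarrow> (F (p i) (p j) \<longleftrightarrow> F i j))}"
    by (auto simp: bij_betw_def inj_on_def)
  have f: "finite {p \<in> {0..<k} \<rightarrow>\<^sub>E {0..<k}. bij_betw p {0..<k} {0..<k} \<and>
      (\<forall>i j. i < k \<longrightarrow> j < k \<longrightarrow> (F (p i) (p j) \<longleftrightarrow> F i j))}"
    by (rule finite_subset[of _ "{0..<k} \<rightarrow>\<^sub>E {0..<k}"]) (auto simp: finite_PiE)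
  show ?thesis unfolding num_aut_def
    using f m by (intro card_gt_0_iff[THEN iffD2]) blast
qed

lemma count_H:
  assumes F: "simple_graph k F" and E: "simple_graph n E"
  shows "card {l \<in> tuples n k. good k E F l} = graphlet_count n E k F * num_aut k F"
proof -
  define H where "H = {l \<in> tuples n k. good k E F l}"
  have fH: "finite H" unfolding H_def using finite_tuples by simp
  have eqH: "(\<Union>y \<in> Phi k F ` H. {l \<in> H. Phi k F l = y}) = H" by blast
  have "card (\<Union>y \<in> Phi k F ` H. {l \<in> H. Phi k F l = y}) = (\<Sum>y \<in> Phi k F ` H. card {l \<in> H. Phi k F l = y})"
    by (rule card_UN_disjoint) (use fH in auto)
  hence "card H = (\<Sum>y \<in> Phi k F ` H. card {l \<in> H. Phi k F l = y})"
    unfolding eqH .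
  also have "\<dots> = (\<Sum>y \<in> Phi k F ` H. num_aut k F)"
  proof (rule sum.cong[OF refl])
    fix y assume "y \<in> Phi k F ` H"
    then obtain l0 where "l0 \<in> H" "y = Phi k F l0" by blast
    thus "card {l \<in> H. Phi k F l = y} = num_aut k F"
      using fiber_card[OF F E] unfolding H_def by simp
  qed
  also have "\<dots> = card (Phi k F ` H) * num_aut k F" by simp
  also have "card (Phi k F ` H) = graphlet_count n E k F"
    unfolding graphlet_count_def GC_eq[OF F E] H_def ..
  finally show ?thesis unfolding H_def .
qed


lemma exp_h:
  assumes eps: "eps > 0"
  shows "measure_pmf.expectation (bernoulli_pmf (rr_prob eps b))
           (\<lambda>v. (exp eps + 1) / (exp eps - 1) * (if v then 1 else 0) - 1 / (exp eps - 1))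
         = (if b then 1 else 0)"
proof -
  have e1: "exp eps > 1" using eps by simp
  have q0: "0 \<le> rr_prob eps b" and q1: "rr_prob eps b \<le> 1"
    unfolding rr_prob_def by (auto simp: field_simps add_pos_pos)
  define e where "e = exp eps"
  have e1': "e > 1" using e1 e_def by simp
  have ne: "e - 1 \<noteq> 0" "1 + e \<noteq> 0" using e1' by auto
  have "1 * 1 < e * e" using e1' by (intro mult_strict_mono) auto
  hence ne2: "e * e - 1 \<noteq> 0" by simp
  have "measure_pmf.expectation (bernoulli_pmf (rr_prob eps b))
           (\<lambda>v. (exp eps + 1) / (exp eps - 1) * (if v then 1 else 0) - 1 / (exp eps - 1))
     = (e + 1) / (e - 1) * rr_prob eps b - 1 / (e - 1)"
    unfolding integral_bernoulli_pmf[OF q0 q1] e_def by (simp add: algebra_simps add_divide_distrib[symmetric])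
  also have "\<dots> = (if b then 1 else 0)"
  proof (cases b)
    case True
    have "(e + 1) / (e - 1) * (e / (1 + e)) = e / (e - 1)"
      using ne by (simp add: divide_simps)
    moreover have "e / (e - 1) - 1 / (e - 1) = (e - 1) / (e - 1)"
      by (rule diff_divide_distrib[symmetric])
    ultimately have "(e + 1) / (e - 1) * (e / (1 + e)) - 1 / (e - 1) = (e - 1) / (e - 1)"
      by simp
    hence "(e + 1) / (e - 1) * (e / (1 + e)) - 1 / (e - 1) = 1"
      using ne by simp
    thus ?thesis using True unfolding rr_prob_def e_def by simp
  next
    case False
    have "(e + 1) / (e - 1) * (1 / (1 + e)) - 1 / (e - 1) = 0"
      using ne by (simp add: field_simps)
    thus ?thesis using False unfolding rr_prob_def e_def by simp
  qed
  finally show ?thesis .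
qed

lemma exp_W:
  assumes eps: "eps > 0" and F: "simple_graph k F" and E: "simple_graph n E"
    and l: "l \<in> tuples n k"
  shows "measure_pmf.expectation (reports_pmf n E eps) (\<lambda>r. W_tilde eps k F r l)
         = (if good k E F l then 1 else 0)"
proof -
  define P where "P = {(i, j). i < n \<and> j < n \<and> i \<noteq> j}"
  define p where "p = (\<lambda>(i, j). bernoulli_pmf (rr_prob eps (E i j)))"
  define h where "h = (\<lambda>v. (exp eps + 1) / (exp eps - 1) * (if v then 1 else 0) - 1 / (exp eps - 1 :: real))"
  define Fe where "Fe = {(i, j). i < j \<and> j < k \<and> F i j}"
  define \<phi> where "\<phi> = (\<lambda>(i, j). (l i, l j))"
  have lP: "l \<in> {0..<k} \<rightarrow>\<^sub>E {0..<n}" and li: "inj_on l {0..<k}" using l unfolding tuples_def by blast+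
  have finP: "finite P"
    by (rule finite_subset[of _ "{0..<n} \<times> {0..<n}"]) (auto simp: P_def)
  have finFe: "finite Fe"
    by (rule finite_subset[of _ "{0..<k} \<times> {0..<k}"]) (auto simp: Fe_def)
  have injphi: "inj_on \<phi> Fe"
  proof (rule inj_onI)
    fix x y assume "x \<in> Fe" "y \<in> Fe" "\<phi> x = \<phi> y"
    thus "x = y" using inj_onD[OF li] unfolding Fe_def \<phi>_def by auto
  qed
  have sub: "\<phi> ` Fe \<subseteq> P"
  proof
    fix z assume "z \<in> \<phi> ` Fe"
    then obtain i j where ij: "i < j" "j < k" "z = (l i, l j)" unfolding Fe_def \<phi>_def by auto
    have "l i \<noteq> l j" using inj_onD[OF li, of i j] ij by auto
    moreover have "l i < n" "l j < n" using lP ij by auto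
    ultimately show "z \<in> P" using ij unfolding P_def by simp
  qed
  have W: "W_tilde eps k F r l = (\<Prod>x\<in>\<phi> ` Fe. h (r x))" for r
  proof -
    have "(\<Prod>x\<in>\<phi> ` Fe. h (r x)) = (\<Prod>x\<in>Fe. h (r (\<phi> x)))"
      by (simp add: prod.reindex[OF injphi])
    also have "\<dots> = W_tilde eps k F r l"
      unfolding W_tilde_def Fe_def
      by (rule prod.cong[OF refl]) (auto simp: \<phi>_def h_def a_hat_def)
    finally show ?thesis by simp
  qed
  have "measure_pmf.expectation (reports_pmf n E eps) (\<lambda>r. W_tilde eps k F r l)
      = measure_pmf.expectation (Pi_pmf P False p) (\<lambda>r. \<Prod>x\<in>\<phi> ` Fe. h (r x))"
    unfolding W reports_pmf_def P_def p_def ..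
  also have "\<dots> = (\<Prod>x\<in>\<phi> ` Fe. measure_pmf.expectation (p x) h)"
    using expectation_prod_Pi_pmf_bool[OF finP sub, of False p "\<lambda>_. h"] by simp
  also have "\<dots> = (\<Prod>x\<in>\<phi> ` Fe. (if E (fst x) (snd x) then 1 else 0))"
  proof (rule prod.cong[OF refl])
    fix x :: "nat \<times> nat"
    obtain a b where x: "x = (a, b)" by force
    show "measure_pmf.expectation (p x) h = (if E (fst x) (snd x) then 1 else 0)"
      unfolding x p_def h_def using exp_h[OF eps] by simp
  qed
  also have "\<dots> = (\<Prod>x\<in>Fe. (if E (l (fst x)) (l (snd x)) then 1 else 0))"
    by (subst prod.reindex[OF injphi]) (simp add: \<phi>_def case_prod_beta comp_def)
  also have "\<dots> = (if good k E F l then 1 else 0)"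
  proof -
    have gd: "good k E F l \<longleftrightarrow> (\<forall>x\<in>Fe. E (l (fst x)) (l (snd x)))"
    proof
      assume "good k E F l"
      thus "\<forall>x\<in>Fe. E (l (fst x)) (l (snd x))" unfolding good_def Fe_def by auto
    next
      assume h: "\<forall>x\<in>Fe. E (l (fst x)) (l (snd x))"
      show "good k E F l" unfolding good_def
      proof (intro allI impI)
        fix i j assume ij: "i < k" "j < k" "F i j"
        have "i \<noteq> j" using F ij unfolding simple_graph_def by blast
        hence "i < j \<or> j < i" by arith
        thus "E (l i) (l j)"
        proof
          assume "i < j" thus ?thesis using h ij unfolding Fe_def by auto
        next
          assume "j < i"
          moreover have "F j i" using F ij unfolding simple_graph_def by blast
          ultimately have "E (l j) (l i)" using h ij unfolding Fe_def by auto
          thus ?thesis using E unfolding simple_graph_def by blast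
        qed
      qed
    qed
    show ?thesis
    proof (cases "good k E F l")
      case True thus ?thesis using gd by (simp add: prod.neutral)
    next
      case False
      then obtain x where "x \<in> Fe" "\<not> E (l (fst x)) (l (snd x))" using gd by blast
      hence "\<exists>a\<in>Fe. \<not> E (l (fst a)) (l (snd a))" by blast
      thus ?thesis using False finFe by (simp add: prod_zero)
    qed
  qed
  finally show ?thesis .
qed

theorem lemma2:
  fixes eps :: real and n k :: nat and E F :: "nat \<Rightarrow> nat \<Rightarrow> bool"
  assumes "eps > 0"
    and "simple_graph n E"
    and "simple_graph k F"
  shows "measure_pmf.expectation (reports_pmf n E eps) (estimator n k F eps)
           = real (graphlet_count n E k F)"
proof -
  have fin: "finite (set_pmf (reports_pmf n E eps))"
  proof -
    have "finite {(i, j). i < n \<and> j < n \<and> i \<noteq> j}"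
      by (rule finite_subset[of _ "{0..<n} \<times> {0..<n}"]) auto
    thus ?thesis unfolding reports_pmf_def by (simp add: set_Pi_pmf finite_PiE_dflt)
  qed
  have "measure_pmf.expectation (reports_pmf n E eps) (estimator n k F eps)
      = measure_pmf.expectation (reports_pmf n E eps) (\<lambda>r. \<Sum>l \<in> tuples n k. W_tilde eps k F r l) / real (num_aut k F)"
    unfolding estimator_def by (rule integral_divide_zero)
  also have "measure_pmf.expectation (reports_pmf n E eps) (\<lambda>r. \<Sum>l \<in> tuples n k. W_tilde eps k F r l)
      = (\<Sum>l \<in> tuples n k. measure_pmf.expectation (reports_pmf n E eps) (\<lambda>r. W_tilde eps k F r l))"
    by (rule Bochner_Integration.integral_sum) (rule integrable_measure_pmf_finite[OF fin])
  also have "\<dots> = (\<Sum>l \<in> tuples n k. (if good k E F l then 1 else 0))"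
    by (rule sum.cong[OF refl]) (rule exp_W[OF assms(1) assms(3) assms(2)])
  also have "\<dots> = real (card {l \<in> tuples n k. good k E F l})"
    using finite_tuples by (simp add: sum.inter_filter[symmetric])
  also have "\<dots> = real (graphlet_count n E k F) * real (num_aut k F)"
    using count_H[OF assms(3) assms(2)] by simp
  finally show ?thesis using num_aut_pos[of k F] by simp
qed

end
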